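(* Let $d>d_*=\frac{\sqrt[4]{27}}{4}$ and let $\kappa$ be a positive, non-constant solution, defined on its maximal interval, of the equation $$\kappa^{3/4}\frac{d^2}{ds^2}\Big(\frac{1}{\kappa^{3/4}}\Big)-3\kappa^2+1=0$$ satisfying the first integral $$\kappa_s^2=\tfrac{16}{9}\kappa^2\big(16\,d\,\kappa^{3/2}-9\kappa^2-1\big).$$ Then $\kappa$ is defined on all of $\mathbb R$ and is periodic.
   Context: This equation is the Euler–Lagrange equation (with $c=1$) of the functional $\Theta(\gamma)=\int_\gamma\kappa^{1/4}\,ds$ on curves in $\mathbb S^2$, where $s$ is arc length and $\kappa$ the geodesic curvature; it governs the curvature of the profile curve of a rotational biconservative surface in $\mathbb S^3$ with nowhere-vanishing gradient of the mean curvature. *)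

theory Defs
  imports "HOL-Analysis.Analysis"
begin

definition d_star :: real where
  "d_star = root 4 27 / 4"

definition biconservative_sol :: "real set \<Rightarrow> (real \<Rightarrow> real) \<Rightarrow> bool" where
  "biconservative_sol J k \<longleftrightarrow>
     open J \<and> is_interval J \<and> J \<noteq> {} \<and>
     (\<forall>s\<in>J. k s > 0 \<and> k differentiable (at s) \<and> deriv k differentiable (at s) \<and>
        k s powr (3/4) * deriv (deriv (\<lambda>t. 1 / k t powr (3/4))) s - 3 * (k s)\<^sup>2 + 1 = 0)"

definition maximal_sol :: "real set \<Rightarrow> (real \<Rightarrow> real) \<Rightarrow> bool" where
  "maximal_sol I k \<longleftrightarrow> biconservative_sol I k \<and>
     (\<forall>J g. I \<subseteq> J \<and> biconservative_sol J g \<and> (\<forall>s\<in>I. g s = k s) \<longrightarrow> J = I)"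

end

theory Submission
  imports Defs
begin


lemma ode_core:
  fixes k k1 :: "real \<Rightarrow> real"
  assumes J: "open J" "s \<in> J" and pos: "\<And>t. t \<in> J \<Longrightarrow> k t > 0"
    and d1: "\<And>t. t \<in> J \<Longrightarrow> (k has_real_derivative k1 t) (at t)"
    and d2: "(k1 has_real_derivative k2) (at s)"
  shows "k s powr (3/4) * deriv (deriv (\<lambda>t. 1 / k t powr (3/4))) s
           = 21/16 * (k1 s)^2 / (k s)^2 - 3/4 * k2 / k s"
proof -
  have D1: "((\<lambda>t. 1 / k t powr (3/4)) has_real_derivative (-3/4 * (k1 t * k t powr (-7/4)))) (at t)"
    if t: "t \<in> J" for t
  proof -
    have kp: "k t > 0" using pos t by auto
    have "((\<lambda>x. k x powr (3/4)) has_real_derivative 3/4 * k t powr (3/4 - of_nat 1) * k1 t) (at t)"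
      by (rule DERIV_fun_powr[OF d1[OF t] kp])
    from DERIV_divide[OF DERIV_const[of 1] this] kp
    have X: "((\<lambda>x. 1 / k x powr (3/4)) has_real_derivative
        (0 * k t powr (3/4) - 1 * (3/4 * k t powr (3/4 - of_nat 1) * k1 t)) / (k t powr (3/4) * k t powr (3/4))) (at t)"
      by simp
    have eq: "(0 * k t powr (3/4) - 1 * (3/4 * k t powr (3/4 - of_nat 1) * k1 t)) / (k t powr (3/4) * k t powr (3/4))
        = -3/4 * (k1 t * k t powr (-7/4))"
    proof -
      have "k t powr (3/4 - of_nat 1) = k t powr ((-7/4) + 3/4 + 3/4)" by simp
      also have "\<dots> = k t powr (-7/4) * k t powr (3/4) * k t powr (3/4)" by (simp only: powr_add)
      finally have "k t powr (3/4 - of_nat 1) = k t powr (-7/4) * k t powr (3/4) * k t powr (3/4)" .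
      then show ?thesis using kp by (simp add: field_simps)
    qed
    show ?thesis using X unfolding eq .
  qed
  note D2 = DERIV_cmult[OF DERIV_mult[OF d2 DERIV_fun_powr[OF d1[OF J(2)] pos[OF J(2)], of "-7/4"]], of "-3/4"]
  note D3 = has_field_derivative_transform_within_open[OF D2 J(1) J(2), of "deriv (\<lambda>t. 1 / k t powr (3/4))"]
  have D3': "(deriv (\<lambda>t. 1 / k t powr (3/4)) has_real_derivative (-3/4 * (k2 * k s powr (-7/4) + (-7/4 * k s powr (-7/4 - of_nat 1) * k1 s) * k1 s))) (at s)"
  proof -
    have eqJ: "-3/4 * (k1 z * k z powr (-7/4)) = deriv (\<lambda>t. 1 / k t powr (3/4)) z" if "z \<in> J" for z
      using DERIV_imp_deriv[OF D1[OF that]] by simp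
    show ?thesis using D3[OF eqJ] by simp
  qed
  have ks: "k s > 0" using pos J by auto
  have e1: "k s powr (3/4) * k s powr (-7/4) = 1 / k s"
  proof -
    have "k s powr (3/4) * k s powr (-7/4) = k s powr (3/4 + -7/4)" by (simp only: powr_add)
    also have "\<dots> = k s powr (- 1)" by simp
    also have "\<dots> = 1 / k s powr 1" by (rule powr_minus_divide)
    also have "\<dots> = 1 / k s" using ks by (simp add: powr_one)
    finally show ?thesis .
  qed
  have e2: "k s powr (3/4) * k s powr (-7/4 - of_nat 1) = 1 / (k s)^2"
  proof -
    have "k s powr (3/4) * k s powr (-7/4 - of_nat 1) = k s powr (3/4 + (-7/4 - of_nat 1))" by (simp only: powr_add)
    also have "\<dots> = k s powr (- 2)" by simp
    also have "\<dots> = 1 / k s powr 2" by (rule powr_minus_divide)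
    also have "\<dots> = 1 / (k s)^2" using ks by simp
    finally show ?thesis .
  qed
  have "k s powr (3/4) * (-3/4 * (k2 * k s powr (-7/4) + (-7/4 * k s powr (-7/4 - of_nat 1) * k1 s) * k1 s))
      = -3/4 * k2 * (k s powr (3/4) * k s powr (-7/4)) + 21/16 * (k1 s)^2 * (k s powr (3/4) * k s powr (-7/4 - of_nat 1))"
    by (simp add: algebra_simps power2_eq_square)
  also have "\<dots> = 21/16 * (k1 s)^2 / (k s)^2 - 3/4 * k2 / k s" unfolding e1 e2 by simp
  finally show ?thesis unfolding DERIV_imp_deriv[OF D3'] .
qed



lemma gronwall_unique:
  fixes k g kd gd F :: "real \<Rightarrow> real" and I V :: "real set" and L :: real
  assumes I: "is_interval I" "sa \<in> I"
    and dk: "\<And>t. t\<in>I \<Longrightarrow> (k has_real_derivative kd t) (at t)"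
    and dk1: "\<And>t. t\<in>I \<Longrightarrow> (kd has_real_derivative F (k t)) (at t)"
    and dg: "\<And>t. t\<in>I \<Longrightarrow> (g has_real_derivative gd t) (at t)"
    and dg1: "\<And>t. t\<in>I \<Longrightarrow> (gd has_real_derivative F (g t)) (at t)"
    and kV: "\<And>t. t\<in>I \<Longrightarrow> k t \<in> V" and gV: "\<And>t. t\<in>I \<Longrightarrow> g t \<in> V"
    and lip: "\<And>x z. x\<in>V \<Longrightarrow> z\<in>V \<Longrightarrow> \<bar>F x - F z\<bar> \<le> L * \<bar>x - z\<bar>"
    and init: "k sa = g sa" "kd sa = gd sa"
    and t: "t \<in> I"
  shows "k t = g t"
proof -
  define w where "w x = (k x - g x)^2 + (kd x - gd x)^2" for x
  define w' where "w' x = 2*(k x - g x)*(kd x - gd x) + 2*(kd x - gd x)*(F (k x) - F (g x))" for x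
  define C where "C = 1 + \<bar>L\<bar>"
  have Cpos: "C > 0" unfolding C_def by simp
  have dw: "(w has_real_derivative w' x) (at x)" if "x \<in> I" for x
    unfolding w_def w'_def
    by (rule derivative_eq_intros dk dk1 dg dg1 that refl | simp add: algebra_simps)+
  have wnn: "w x \<ge> 0" for x unfolding w_def by simp
  have bound: "\<bar>w' x\<bar> \<le> C * w x" if "x \<in> I" for x
  proof -
    define e where "e = k x - g x"
    define f where "f = kd x - gd x"
    have l: "\<bar>F (k x) - F (g x)\<bar> \<le> \<bar>L\<bar> * \<bar>e\<bar>"
      using lip[OF kV[OF that] gV[OF that]] unfolding e_def
      by (meson abs_ge_self abs_ge_zero mult_right_mono order_trans)
    have a1: "\<bar>2*e*f\<bar> \<le> e^2 + f^2"
      using sum_squares_bound[of e f] abs_le_square_iff by (smt (verit) power2_sum power2_diff zero_le_power2)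
    have a2: "\<bar>2*f*(F (k x) - F (g x))\<bar> \<le> 2*\<bar>f\<bar>*(\<bar>L\<bar>*\<bar>e\<bar>)"
      using l by (simp add: abs_mult mult_left_mono)
    have a3: "2*\<bar>f\<bar>*\<bar>e\<bar> \<le> e^2 + f^2" using a1 by (simp add: abs_mult mult.commute mult.left_commute)
    have a4: "2*\<bar>f\<bar>*(\<bar>L\<bar>*\<bar>e\<bar>) \<le> \<bar>L\<bar> * (e^2 + f^2)"
      using mult_left_mono[OF a3, of "\<bar>L\<bar>"] by (simp add: algebra_simps)
    have "\<bar>w' x\<bar> \<le> \<bar>2*e*f\<bar> + \<bar>2*f*(F (k x) - F (g x))\<bar>"
      unfolding w'_def e_def f_def by (rule abs_triangle_ineq)
    also have "\<dots> \<le> (e^2 + f^2) + \<bar>L\<bar> * (e^2 + f^2)" using a1 a2 a4 by linarith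
    also have "\<dots> = C * w x" unfolding C_def w_def e_def f_def by (simp add: algebra_simps)
    finally show ?thesis .
  qed
  have w0: "w sa = 0" unfolding w_def using init by simp
  have seg: "x \<in> I" if "min sa t \<le> x" "x \<le> max sa t" for x
    using I(1) I(2) t that unfolding is_interval_1
    by (metis linorder_linear max_def min_def)
  have "w t = 0"
  proof (cases "sa \<le> t")
    case True
    define z where "z x = exp (- C * x) * w x" for x
    have "z t \<le> z sa"
    proof (rule DERIV_nonpos_imp_nonincreasing[OF True])
      fix x assume x: "sa \<le> x" "x \<le> t"
      then have xI: "x \<in> I" using seg by simp
      have "(z has_real_derivative (- C * exp (- C * x) * w x + exp (- C * x) * w' x)) (at x)"
        unfolding z_def by (rule derivative_eq_intros dw[OF xI] refl | simp)+
      moreover have "- C * exp (- C * x) * w x + exp (- C * x) * w' x \<le> 0"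
      proof -
        have "w' x \<le> C * w x" using bound[OF xI] by linarith
        then have "exp (- C * x) * w' x \<le> exp (- C * x) * (C * w x)" by simp
        then show ?thesis by (simp add: algebra_simps)
      qed
      ultimately show "\<exists>y. (z has_real_derivative y) (at x) \<and> y \<le> 0" by blast
    qed
    then have "exp (- C * t) * w t \<le> 0" unfolding z_def using w0 by simp
    then show ?thesis using wnn[of t] by (simp add: mult_le_0_iff)
  next
    case False
    then have ts: "t \<le> sa" by simp
    define z where "z x = exp (C * x) * w x" for x
    have "z t \<le> z sa"
    proof (rule DERIV_nonneg_imp_nondecreasing[OF ts])
      fix x assume x: "t \<le> x" "x \<le> sa"
      then have xI: "x \<in> I" using seg by simp
      have "(z has_real_derivative (C * exp (C * x) * w x + exp (C * x) * w' x)) (at x)"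
        unfolding z_def by (rule derivative_eq_intros dw[OF xI] refl | simp)+
      moreover have "C * exp (C * x) * w x + exp (C * x) * w' x \<ge> 0"
      proof -
        have "- (C * w x) \<le> w' x" using bound[OF xI] by linarith
        then have "exp (C * x) * (- (C * w x)) \<le> exp (C * x) * w' x" by (rule mult_left_mono) simp
        then show ?thesis by (simp add: algebra_simps)
      qed
      ultimately show "\<exists>y. (z has_real_derivative y) (at x) \<and> y \<ge> 0" by blast
    qed
    then have "exp (C * t) * w t \<le> 0" unfolding z_def using w0 by simp
    then show ?thesis using wnn[of t] by (simp add: mult_le_0_iff)
  qed
  then show ?thesis unfolding w_def by (simp add: add_nonneg_eq_0_iff)
qed



definition pp :: "real \<Rightarrow> real \<Rightarrow> real" where "pp d y = 16 * d * y^3 - 9 * y^4 - 1"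

lemma dstar_facts:
  assumes "d > d_star" shows "d > 0" "256 * d^4 > 27"
proof -
  have r: "root 4 27 > 0" by simp
  have "root 4 27 < 4 * d" using assms unfolding d_star_def by simp
  then show "d > 0" using r by linarith
  from \<open>root 4 27 < 4 * d\<close> have "(root 4 27)^4 < (4 * d)^4" using r by (intro power_strict_mono) auto
  moreover have "(root 4 27)^4 = 27" by (simp add: real_root_pow_pos2)
  ultimately show "256 * d^4 > 27" by simp
qed

lemma pp_diff: "pp d v - pp d u = (v - u) * (16 * d * (v^2 + u * v + u^2) - 9 * (v+u) * (v^2 + u^2))"
  unfolding pp_def by (simp add: algebra_simps power2_eq_square power3_eq_cube power4_eq_xxxx)

lemma pp_mono1:
  assumes "d > 0" "0 \<le> u" "u < v" "v \<le> 4 * d/3" shows "pp d u < pp d v"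
proof -
  have q: "v^2 + u * v + u^2 \<ge> 0" using assms by simp
  have "12 * v * (v^2 + u * v + u^2) \<le> 16 * d * (v^2 + u * v + u^2)"
    using mult_right_mono[OF _ q, of "12 * v" "16 * d"] assms by simp
  moreover have "12 * v * (v^2 + u * v + u^2) - 9 * (v+u) * (v^2 + u^2) > 0"
  proof -
    have "12 * v * (v^2 + u * v + u^2) - 9 * (v+u) * (v^2 + u^2) = 3 * (v^3-u^3) + 3 * (u * (v^2-u^2)) + 3 * (u^2 * (v-u))"
      by (simp add: algebra_simps power2_eq_square power3_eq_cube)
    moreover have "v^3 > u^3" using assms by (intro power_strict_mono) auto
    moreover have "v^2 \<ge> u^2" using assms by (intro power_mono) auto
    moreover have "u^2 * (v-u) \<ge> 0" using assms by simp
    moreover have "u * (v^2-u^2) \<ge> 0" using assms calculation(3) by simp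
    ultimately show ?thesis by (smt (verit))
  qed
  ultimately have "16 * d * (v^2 + u * v + u^2) - 9 * (v+u) * (v^2 + u^2) > 0" by linarith
  then show ?thesis using pp_diff[of d v u] assms by (smt (verit) mult_pos_pos)
qed

lemma pp_mono2:
  assumes "d > 0" "4 * d/3 \<le> u" "u < v" shows "pp d v < pp d u"
proof -
  have u0: "u > 0" using assms by simp
  have q: "v^2 + u * v + u^2 \<ge> 0" using assms u0 by simp
  have "16 * d * (v^2 + u * v + u^2) \<le> 12 * u * (v^2 + u * v + u^2)"
    using mult_right_mono[OF _ q, of "16 * d" "12 * u"] assms by simp
  moreover have "12 * u * (v^2 + u * v + u^2) - 9 * (v+u) * (v^2 + u^2) < 0"
  proof -
    have "12 * u * (v^2 + u * v + u^2) - 9 * (v+u) * (v^2 + u^2) = 3 * (u * v^2-v^3) + 3 * (u^2 * v - v^3) + 3 * (u^3-v^3)"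
      by (simp add: algebra_simps power2_eq_square power3_eq_cube)
    moreover have "v^3 > u^3" using assms u0 by (intro power_strict_mono) auto
    moreover have "u * v^2 < v^3" using assms u0 by (simp add: power2_eq_square power3_eq_cube)
    moreover have "u^2 * v < v^3" using assms u0
      by (simp add: power2_eq_square power3_eq_cube mult_strict_mono)
    ultimately show ?thesis by (smt (verit))
  qed
  ultimately have "16 * d * (v^2 + u * v + u^2) - 9 * (v+u) * (v^2 + u^2) < 0" by linarith
  then show ?thesis using pp_diff[of d v u] assms by (smt (verit) mult_pos_neg)
qed

lemma pp_cont: "isCont (pp d) x" unfolding pp_def by (intro continuous_intros)

lemma roots_exist:
  assumes "d > d_star"
  shows "\<exists>y1 y2. 0 < y1 \<and> y1 < 4 * d/3 \<and> 4 * d/3 < y2 \<and> pp d y1 = 0 \<and> pp d y2 = 0"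
proof -
  have d0: "d > 0" and d4: "256 * d^4 > 27" using dstar_facts[OF assms] by auto
  have pm: "pp d (4 * d/3) > 0"
  proof -
    have "pp d (4 * d/3) = 256/27 * d^4 - 1" unfolding pp_def by (simp add: field_simps power_numeral_reduce)
    then show ?thesis using d4 by simp
  qed
  have p0: "pp d 0 < 0" unfolding pp_def by simp
  have p2: "pp d (2 * d) < 0"
  proof -
    have "pp d (2 * d) = -16 * d^4 - 1" unfolding pp_def by (simp add: field_simps power_numeral_reduce)
    then show ?thesis using d0 by (smt (verit) zero_less_power)
  qed
  obtain y1 where y1: "0 \<le> y1" "y1 \<le> 4 * d/3" "pp d y1 = 0"
    using IVT[of "pp d" 0 0 "4 * d/3"] p0 pm d0 pp_cont by force
  obtain y2 where y2: "4 * d/3 \<le> y2" "y2 \<le> 2 * d" "pp d y2 = 0"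
    using IVT2[of "pp d" "2 * d" 0 "4 * d/3"] p2 pm d0 pp_cont by force
  have "y1 \<noteq> 0" using y1 p0 by auto
  moreover have "y1 \<noteq> 4 * d/3" using y1(3) pm by (metis less_irrefl)
  moreover have "y2 \<noteq> 4 * d/3" using y2(3) pm by (metis less_irrefl)
  ultimately show ?thesis using y1 y2 by (intro exI[of _ y1] exI[of _ y2]) auto
qed



locale osc =
  fixes d y1 y2 :: real
  assumes d0: "0 < d" and y1p: "0 < y1" and y1l: "y1 < 4 * d / 3" and y2g: "4 * d / 3 < y2"
    and py1: "pp d y1 = 0" and py2: "pp d y2 = 0"
begin

definition "aa = 16 * d - 9 * (y1 + y2)"
definition "bb = aa * (y1 + y2) + 9 * (y1 * y2)"
definition "RR y = 9 * y^2 - aa * y - bb"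
definition "c1 = bb * (y1 + y2) - aa * (y1 * y2)"
definition "c0 = 1 + bb * (y1 * y2)"

lemma E_id: "- pp d y - (y^2 - (y1 + y2) * y + y1 * y2) * RR y = - c1 * y + c0"
  unfolding pp_def RR_def c1_def c0_def bb_def aa_def
  by (simp add: algebra_simps power2_eq_square power3_eq_cube power4_eq_xxxx)

lemma coef: "c1 = 0" "c0 = 0"
proof -
  have a: "- c1 * y1 + c0 = 0" using E_id[of y1] py1 by (simp add: power2_eq_square algebra_simps)
  have b: "- c1 * y2 + c0 = 0" using E_id[of y2] py2 by (simp add: power2_eq_square algebra_simps)
  have "c1 * (y2 - y1) = (- c1 * y1 + c0) - (- c1 * y2 + c0)" by (simp add: algebra_simps)
  also have "\<dots> = 0" unfolding a b by simp
  finally have "c1 * (y2 - y1) = 0" .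
  moreover have "y2 - y1 \<noteq> 0" using y1l y2g by simp
  ultimately show "c1 = 0" by (metis mult_eq_0_iff)
  then show "c0 = 0" using a by simp
qed

lemma factor: "pp d y = (y - y1) * (y2 - y) * RR y"
  using E_id[of y] coef by (simp add: algebra_simps power2_eq_square)

lemma y12: "y1 < y2" using y1l y2g by simp

lemma pp_pos: assumes "y1 < y" "y < y2" shows "pp d y > 0"
proof (cases "y \<le> 4 * d / 3")
  case True
  then show ?thesis using pp_mono1[OF d0 _ assms(1) True] y1p py1 by simp
next
  case False
  then show ?thesis using pp_mono2[OF d0 _ assms(2)] py2 by simp
qed

lemma pp_range: assumes "0 < y" "pp d y \<ge> 0" shows "y1 \<le> y \<and> y \<le> y2"
proof (rule ccontr)
  assume "\<not> (y1 \<le> y \<and> y \<le> y2)"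
  then consider "y < y1" | "y2 < y" by linarith
  then show False
  proof cases
    case 1 then show ?thesis using pp_mono1[OF d0 _ 1] y1l py1 assms by simp
  next
    case 2 then show ?thesis using pp_mono2[OF d0 _ 2] y2g py2 assms by simp
  qed
qed

lemma RR_pos: assumes "y1 \<le> y" "y \<le> y2" shows "RR y > 0"
proof -
  have fe: "pp d = (\<lambda>y. (y - y1) * (y2 - y) * RR y)" using factor by auto
  have dp: "(pp d has_real_derivative (48 * d * z^2 - 36 * z^3)) (at z)" for z
    unfolding pp_def by (rule derivative_eq_intros refl | simp add: power2_eq_square power3_eq_cube)+
  have dq: "((\<lambda>y. (y - y1) * (y2 - y) * RR y) has_real_derivative
      ((y2 - z) - (z - y1)) * RR z + (z - y1) * (y2 - z) * (18 * z - aa)) (at z)" for z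
    unfolding RR_def by (rule derivative_eq_intros refl | simp add: algebra_simps power2_eq_square)+
  have eqd: "48 * d * z^2 - 36 * z^3 = ((y2 - z) - (z - y1)) * RR z + (z - y1) * (y2 - z) * (18 * z - aa)" for z
    using DERIV_unique[OF dp[of z]] dq[of z] fe by metis
  show ?thesis
  proof (cases "y = y1")
    case True
    have "(y2 - y1) * RR y1 = 12 * y1^2 * (4 * d - 3 * y1)" using eqd[of y1]
      by (simp add: algebra_simps power2_eq_square power3_eq_cube)
    moreover have "12 * y1^2 * (4 * d - 3 * y1) > 0" using y1p y1l by simp
    ultimately have "(y2 - y1) * RR y1 > 0" by linarith
    then show ?thesis using True y12 by (metis diff_gt_0_iff_gt zero_less_mult_pos)
  next
    case F1: False
    show ?thesis
    proof (cases "y = y2")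
      case True
      have "- (y2 - y1) * RR y2 = 12 * y2^2 * (4 * d - 3 * y2)" using eqd[of y2]
        by (simp add: algebra_simps power2_eq_square power3_eq_cube)
      moreover have "12 * y2^2 * (4 * d - 3 * y2) < 0" using y2g y1p y1l
        by (simp add: mult_pos_neg)
      ultimately have "(y2 - y1) * RR y2 > 0" by linarith
      then show ?thesis using True y12 by (metis diff_gt_0_iff_gt zero_less_mult_pos)
    next
      case False
      then have "y1 < y" "y < y2" using F1 assms by auto
      then have "pp d y > 0" "(y - y1) * (y2 - y) > 0" using pp_pos by auto
      then show ?thesis using factor[of y] by (simp add: zero_less_mult_iff)
    qed
  qed
qed

end


context osc begin

definition "mm = (y1 + y2) / 2"
definition "hh = (y2 - y1) / 2"
definition "Y th = mm - hh * cos th"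
definition "SS th = sqrt (RR (Y th))"
definition "om th = 2/3 * Y th * SS th"
definition "GG th = 4/3 * hh * (Y th)^2 * SS th * sin th"
definition "GG' th = 4/3 * hh * (2 * Y th * (hh * sin th) * SS th * sin th
    + (Y th)^2 * ((18 * Y th - aa) * (hh * sin th) / (2 * SS th)) * sin th
    + (Y th)^2 * SS th * cos th)"

lemma hh_pos: "hh > 0" unfolding hh_def using y12 by simp

lemma Y_range: "y1 \<le> Y th" "Y th \<le> y2"
proof -
  have "-1 \<le> cos th" "cos th \<le> 1" by auto
  then have "- hh \<le> hh * cos th" "hh * cos th \<le> hh" using hh_pos
    by (metis mult.right_neutral mult_left_mono less_imp_le mult_minus_right)+
  then show "y1 \<le> Y th" "Y th \<le> y2" unfolding Y_def mm_def hh_def by (simp_all add: field_simps)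
qed

lemma Y_pos: "Y th > 0" using Y_range(1)[of th] y1p by simp

lemma RRY_pos: "RR (Y th) > 0" using RR_pos Y_range by blast

lemma SS_pos: "SS th > 0" unfolding SS_def using RRY_pos by simp

lemma SS_sq: "(SS th)^2 = RR (Y th)" unfolding SS_def using RRY_pos[of th] by (simp add: less_imp_le)

lemma om_pos: "om th > 0" unfolding om_def using Y_pos SS_pos by simp

lemma D_id: "(Y th - y1) * (y2 - Y th) = hh^2 * (sin th)^2"
proof -
  have a: "Y th - y1 = hh * (1 - cos th)" unfolding Y_def mm_def hh_def by (simp add: field_simps)
  have b: "y2 - Y th = hh * (1 + cos th)" unfolding Y_def mm_def hh_def by (simp add: field_simps)
  have "(Y th - y1) * (y2 - Y th) = hh^2 * (1 - (cos th)^2)"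
    unfolding a b by algebra
  then show ?thesis by (simp add: sin_squared_eq)
qed

lemma cos_id: "hh * cos th = mm - Y th" unfolding Y_def by simp

lemma Y_deriv: "(Y has_real_derivative (hh * sin th)) (at th)"
  unfolding Y_def[abs_def] by (rule derivative_eq_intros refl | simp)+

lemma SS_deriv: "(SS has_real_derivative ((18 * Y th - aa) * (hh * sin th) / (2 * SS th))) (at th)"
proof -
  have r: "((\<lambda>t. RR (Y t)) has_real_derivative ((18 * Y th - aa) * (hh * sin th))) (at th)"
    unfolding RR_def by (rule derivative_eq_intros Y_deriv refl | simp add: algebra_simps)+
  have "((\<lambda>t. sqrt (RR (Y t))) has_real_derivative (inverse (sqrt (RR (Y th))) / 2) * ((18 * Y th - aa) * (hh * sin th))) (at th)"
    by (rule DERIV_chain2[OF DERIV_real_sqrt[OF RRY_pos] r])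
  then show ?thesis unfolding SS_def[abs_def] by (simp add: field_simps)
qed

lemma GG_deriv: "(GG has_real_derivative GG' th) (at th)"
  unfolding GG_def[abs_def] GG'_def
  by (rule derivative_eq_intros Y_deriv SS_deriv refl | simp add: algebra_simps)+

lemma key_poly:
  fixes y :: real
  shows "8/9 * y * (2 * y * ((y - y1) * (y2 - y)) * RR y + y^2 * (18 * y - aa) * ((y - y1) * (y2 - y)) / 2
          + y^2 * RR y * (mm - y))
        = 448/9 * d * y^5 - 32 * y^6 - 16/9 * y^2
          + 8/9 * (2 * y^2 * (- c1 * y + c0) - y^3 * c1 / 2)"
  unfolding RR_def c1_def c0_def bb_def aa_def mm_def
  by (simp add: field_simps power2_eq_square power3_eq_cube power_numeral_reduce)

lemma key_id: "GG' th * om th = 448/9 * d * (Y th)^5 - 32 * (Y th)^6 - 16/9 * (Y th)^2"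
proof -
  define y where "y = Y th"
  define s where "s = sin th"
  define c where "c = cos th"
  define S where "S = SS th"
  have S0: "S > 0" unfolding S_def using SS_pos by simp
  have S2: "S^2 = RR y" unfolding S_def y_def using SS_sq by simp
  have hs: "hh^2 * s^2 = (y - y1) * (y2 - y)" unfolding s_def y_def using D_id by simp
  have hc: "hh * c = mm - y" unfolding c_def y_def using cos_id by simp
  have "GG' th * om th = 8/9 * y * (2 * y * (hh^2 * s^2) * S^2 + y^2 * (18 * y - aa) * (hh^2 * s^2) / 2
          + y^2 * S^2 * (hh * c))"
    unfolding GG'_def om_def y_def[symmetric] s_def[symmetric] c_def[symmetric] S_def[symmetric]
    using S0 by (simp add: field_simps power2_eq_square)
  also have "\<dots> = 448/9 * d * y^5 - 32 * y^6 - 16/9 * y^2"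
    unfolding hs hc S2 key_poly coef by simp
  finally show ?thesis unfolding y_def .
qed

lemma GG_sq: "(GG th)^2 = 16/9 * (Y th)^4 * pp d (Y th)"
proof -
  have "(GG th)^2 = 16/9 * (Y th)^4 * ((hh^2 * (sin th)^2) * (SS th)^2)"
    unfolding GG_def by (simp add: power_mult_distrib power2_eq_square algebra_simps power4_eq_xxxx)
  also have "\<dots> = 16/9 * (Y th)^4 * pp d (Y th)"
    unfolding D_id[symmetric] SS_sq factor by simp
  finally show ?thesis .
qed

lemma GG_sign: "sin th \<ge> 0 \<Longrightarrow> GG th \<ge> 0" "sin th \<le> 0 \<Longrightarrow> GG th \<le> 0"
  unfolding GG_def using hh_pos SS_pos[of th] Y_pos[of th]
  by (simp_all add: mult_nonneg_nonneg mult_nonneg_nonpos)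

end


definition FF :: "real \<Rightarrow> real \<Rightarrow> real" where
  "FF d x = 448/9 * d * x powr (5/2) - 32 * x^3 - 16/9 * x"
definition QQ :: "real \<Rightarrow> real \<Rightarrow> real" where
  "QQ d x = 16/9 * x^2 * (16 * d * x powr (3/2) - 9 * x^2 - 1)"

lemma sq_powr: fixes y :: real assumes "y > 0" shows "(y^2) powr (5/2) = y^5" "(y^2) powr (3/2) = y^3"
proof -
  have "y^2 = y powr (2::real)" using assms powr_realpow[of y 2] by simp
  then have e: "(y^2) powr r = y powr (2 * r)" for r by (simp add: powr_powr)
  have p5: "y powr (5::real) = y^5" using powr_realpow[of y 5] assms by simp
  have p3: "y powr (3::real) = y^3" using powr_realpow[of y 3] assms by simp
  show "(y^2) powr (5/2) = y^5" unfolding e using p5 by simp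
  show "(y^2) powr (3/2) = y^3" unfolding e using p3 by simp
qed

context osc begin

lemma om_cont: "isCont om x"
proof -
  have "((\<lambda>x. 2/3 * Y x * SS x) has_real_derivative
      (2/3 * (hh * sin x)) * SS x + ((18 * Y x - aa) * (hh * sin x) / (2 * SS x)) * (2/3 * Y x)) (at x)"
    by (rule DERIV_mult[OF DERIV_cmult[OF Y_deriv] SS_deriv])
  then have "isCont (\<lambda>x. 2/3 * Y x * SS x) x" by (rule DERIV_isCont)
  then show ?thesis unfolding om_def[abs_def] .
qed

lemma om_periodic: "om (x + 2 * pi) = om x"
  unfolding om_def SS_def Y_def by simp

definition "Tf = (SOME F. \<forall>x. (F has_real_derivative inverse (om x)) (at x))"

lemma Tf_deriv: "(Tf has_real_derivative inverse (om x)) (at x)"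
proof -
  have c: "isCont (\<lambda>x. inverse (om x)) x" for x
    using om_cont om_pos by (intro continuous_intros) (auto simp: less_imp_neq[symmetric])
  obtain F where "\<forall>x::real. (-\<infinity>::ereal) < x \<longrightarrow> x < \<infinity> \<longrightarrow> (F has_vector_derivative inverse (om x)) (at x)"
    using einterval_antiderivative[of "-\<infinity>" "\<infinity>" "\<lambda>x. inverse (om x)"] c by auto
  then have "\<forall>x. (F has_real_derivative inverse (om x)) (at x)"
    by (simp add: has_real_derivative_iff_has_vector_derivative)
  then have "\<exists>F. \<forall>x. (F has_real_derivative inverse (om x)) (at x)" by blast
  then show ?thesis unfolding Tf_def by (rule someI_ex[THEN spec])
qed

lemma Tf_cont: "isCont Tf x" using Tf_deriv DERIV_isCont by blast

lemma Tf_mono: "x < y \<Longrightarrow> Tf x < Tf y"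
  by (rule DERIV_pos_imp_increasing[where f=Tf]) (meson Tf_deriv om_pos positive_imp_inverse_positive)+

lemma Tf_inj: "Tf x = Tf y \<Longrightarrow> x = y"
  using Tf_mono by (metis linorder_neqE_linordered_idom less_irrefl)

definition "Tp = Tf (2 * pi) - Tf 0"

lemma Tp_pos: "Tp > 0" unfolding Tp_def using Tf_mono[of 0 "2 * pi"] by simp

lemma Tf_shift: "Tf (x + 2 * pi) = Tf x + Tp"
proof -
  have "\<forall>x. ((\<lambda>x. Tf (x + 2 * pi) - Tf x) has_real_derivative 0) (at x)"
  proof
    fix x
    have d1: "((\<lambda>x. x + 2 * pi) has_real_derivative 1) (at x)"
      using DERIV_add[OF DERIV_ident DERIV_const[of "2 * pi"]] by simp
    have d2: "((\<lambda>x. Tf (x + 2 * pi)) has_real_derivative inverse (om (x + 2 * pi)) * 1) (at x)"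
      by (rule DERIV_chain2[of Tf "inverse (om (x + 2 * pi))" "\<lambda>x. x + 2 * pi" x 1, OF Tf_deriv d1])
    have "((\<lambda>x. Tf (x + 2 * pi) - Tf x) has_real_derivative inverse (om (x + 2 * pi)) * 1 - inverse (om x)) (at x)"
      by (rule DERIV_diff[OF d2 Tf_deriv])
    then show "((\<lambda>x. Tf (x + 2 * pi) - Tf x) has_real_derivative 0) (at x)" by (simp add: om_periodic)
  qed
  from DERIV_isconst_all[OF this, of x 0] show ?thesis unfolding Tp_def by simp
qed

lemma Tf_shift_n: "Tf (x + 2 * pi * real n) = Tf x + real n * Tp"
proof (induction n)
  case 0 then show ?case by simp
next
  case (Suc n)
  have "Tf (x + 2 * pi * real (Suc n)) = Tf ((x + 2 * pi * real n) + 2 * pi)" by (simp add: algebra_simps)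
  also have "\<dots> = Tf x + real (Suc n) * Tp" unfolding Tf_shift Suc by (simp add: algebra_simps)
  finally show ?case .
qed

lemma Tf_surj: "\<exists>x. Tf x = t"
proof -
  obtain n where n: "\<bar>t - Tf 0\<bar> < real n * Tp" using ex_less_of_nat_mult[OF Tp_pos] by blast
  have a: "Tf (- 2 * pi * real n) = Tf 0 - real n * Tp"
    using Tf_shift_n[of "- 2 * pi * real n" n] by simp
  have b: "Tf (2 * pi * real n) = Tf 0 + real n * Tp"
    using Tf_shift_n[of 0 n] by simp
  have "\<exists>x. - 2 * pi * real n \<le> x \<and> x \<le> 2 * pi * real n \<and> Tf x = t"
  proof (rule IVT)
    show "Tf (- 2 * pi * real n) \<le> t" using a n by linarith
    show "t \<le> Tf (2 * pi * real n)" using b n by linarith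
    show "- 2 * pi * real n \<le> 2 * pi * real n" by simp
    show "\<forall>x. - 2 * pi * real n \<le> x \<and> x \<le> 2 * pi * real n \<longrightarrow> isCont Tf x" using Tf_cont by blast
  qed
  then show ?thesis by blast
qed

definition "th t = (THE x. Tf x = t)"

lemma Tf_th: "Tf (th t) = t"
proof -
  have "\<exists>!x. Tf x = t" using Tf_surj Tf_inj by blast
  then show ?thesis unfolding th_def by (rule theI')
qed

lemma th_Tf: "th (Tf x) = x" using Tf_th Tf_inj by blast

lemma th_cont: "isCont th t"
proof -
  have "isCont th (Tf (th t))"
    by (rule isCont_inverse_function[of 1 "th t" th Tf]) (simp_all add: th_Tf Tf_cont)
  then show ?thesis by (simp add: Tf_th)
qed

lemma th_deriv: "(th has_real_derivative om (th t)) (at t)"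
proof -
  have "(th has_real_derivative inverse (inverse (om (th t)))) (at t)"
  proof (rule DERIV_inverse_function[where a="t - 1" and b="t + 1" and f=Tf])
    show "(Tf has_real_derivative inverse (om (th t))) (at (th t))" by (rule Tf_deriv)
    show "inverse (om (th t)) \<noteq> 0" using om_pos[of "th t"] by simp
    show "isCont th t" by (rule th_cont)
  qed (simp_all add: Tf_th)
  then show ?thesis by simp
qed

lemma th_shift: "th (t + Tp) = th t + 2 * pi"
proof -
  have "Tf (th t + 2 * pi) = t + Tp" using Tf_shift[of "th t"] by (simp add: Tf_th)
  then have "th (t + Tp) = th (Tf (th t + 2 * pi))" by simp
  then show ?thesis by (simp add: th_Tf)
qed

definition "psi c t = (Y (th (t + c)))^2"
definition "psi1 c t = GG (th (t + c))"

lemma th_c_deriv: "((\<lambda>t. th (t + c)) has_real_derivative om (th (t + c))) (at t)"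
proof -
  have d1: "((\<lambda>t. t + c) has_real_derivative 1) (at t)" by (rule derivative_eq_intros refl | simp)+
  show ?thesis using DERIV_chain2[of th "om (th (t + c))" "\<lambda>t. t + c" t 1, OF th_deriv d1] by simp
qed

lemma Y_chain: "((\<lambda>t. Y (th (t + c))) has_real_derivative hh * sin (th (t + c)) * om (th (t + c))) (at t)"
  using DERIV_chain2[of Y "hh * sin (th (t + c))" "\<lambda>t. th (t + c)" t "om (th (t + c))", OF Y_deriv th_c_deriv]
  by simp

lemma psi_deriv: "(psi c has_real_derivative psi1 c t) (at t)"
proof -
  define y where "y = Y (th (t + c))"
  have sq: "((\<lambda>x. x^2) has_real_derivative 2 * y) (at y)"
    using DERIV_pow[of 2 y] by simp
  have "((\<lambda>t. (Y (th (t + c)))^2) has_real_derivative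
      (2 * y) * (hh * sin (th (t + c)) * om (th (t + c)))) (at t)"
    using DERIV_chain2[of "\<lambda>x. x^2" "2 * y" "\<lambda>t. Y (th (t + c))" t, OF _ Y_chain] sq
    unfolding y_def by simp
  moreover have "(2 * y) * (hh * sin (th (t + c)) * om (th (t + c))) = psi1 c t"
    unfolding psi1_def GG_def om_def y_def by (simp add: power2_eq_square mult_ac)
  ultimately show ?thesis unfolding psi_def[abs_def] by simp
qed

lemma psi_pos: "psi c t > 0" unfolding psi_def using Y_pos[of "th (t + c)"] by simp

lemma pow_facts: fixes y :: real shows "(y^2)^2 = y^4" "(y^2)^3 = y^6"
  by (simp_all flip: power_mult)

lemma psi1_deriv: "(psi1 c has_real_derivative FF d (psi c t)) (at t)"
proof -
  define y where "y = Y (th (t + c))"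
  have y0: "y > 0" unfolding y_def by (rule Y_pos)
  have "(psi1 c has_real_derivative GG' (th (t + c)) * om (th (t + c))) (at t)"
    unfolding psi1_def[abs_def]
    by (rule DERIV_chain2[of GG "GG' (th (t + c))" "\<lambda>t. th (t + c)" t "om (th (t + c))", OF GG_deriv th_c_deriv])
  moreover have "GG' (th (t + c)) * om (th (t + c)) = 448/9 * d * y^5 - 32 * y^6 - 16/9 * y^2"
    unfolding key_id y_def ..
  moreover have "FF d (psi c t) = 448/9 * d * y^5 - 32 * y^6 - 16/9 * y^2"
    unfolding FF_def psi_def y_def[symmetric] sq_powr[OF y0] pow_facts ..
  ultimately show ?thesis by simp
qed

lemma psi1_sq: "(psi1 c t)^2 = QQ d (psi c t)"
proof -
  define y where "y = Y (th (t + c))"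
  have y0: "y > 0" unfolding y_def by (rule Y_pos)
  show ?thesis
    unfolding psi1_def psi_def GG_sq QQ_def y_def[symmetric] sq_powr[OF y0] pp_def pow_facts ..
qed

lemma psi_periodic: "psi c (t + Tp) = psi c t"
proof -
  have e: "t + Tp + c = (t + c) + Tp" by simp
  have "th (t + Tp + c) = th (t + c) + 2 * pi" unfolding e by (rule th_shift)
  then show ?thesis unfolding psi_def Y_def by simp
qed

lemma psi_range: "y1^2 \<le> psi c t" "psi c t \<le> y2^2"
proof -
  have a: "y1 \<le> Y (th (t + c))" "Y (th (t + c)) \<le> y2" by (rule Y_range)+
  show "y1^2 \<le> psi c t" unfolding psi_def using a y1p by (intro power_mono) auto
  show "psi c t \<le> y2^2" unfolding psi_def using a y1p by (intro power_mono) auto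
qed

end


lemma powr52: fixes x :: real assumes "x > 0" shows "x powr (5/2) = x * x powr (3/2)"
proof -
  have "x powr (5/2) = x powr (1 + 3/2)" by simp
  also have "\<dots> = x powr 1 * x powr (3/2)" by (simp only: powr_add)
  finally show ?thesis using assms by simp
qed

lemma ode_to_FF:
  fixes x k1 k2 d :: real
  assumes x: "x > 0" and q: "k1^2 = QQ d x"
  shows "21/16 * k1^2 / x^2 - 3/4 * k2 / x - 3 * x^2 + 1 = 0 \<longleftrightarrow> k2 = FF d x"
proof -
  define P where "P = x powr (3/2)"
  have e1: "21/16 * k1^2 / x^2 - 3/4 * k2 / x - 3 * x^2 + 1
      = (4/3 * x * (7/3 * (16 * d * P - 9 * x^2 - 1) - 3 * x^2 + 1) - k2) * (3/4) / x"
    unfolding q QQ_def P_def[symmetric] using x by (simp add: field_simps power2_eq_square)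
  have e2: "FF d x = 4/3 * x * (7/3 * (16 * d * P - 9 * x^2 - 1) - 3 * x^2 + 1)"
    unfolding FF_def powr52[OF x] P_def[symmetric] by (simp add: algebra_simps power3_eq_cube power2_eq_square)
  have "(FF d x - k2) * (3/4) / x = 0 \<longleftrightarrow> FF d x - k2 = 0" using x by simp
  then show ?thesis unfolding e1 e2[symmetric] by linarith
qed

lemma abs_help: fixes u v w :: real assumes "v \<ge> 0" "w \<ge> 0" shows "\<bar>u - v - w\<bar> \<le> \<bar>u\<bar> + v + w"
  using assms by (simp add: abs_le_iff) linarith

lemma FF_lip:
  fixes a b d :: real assumes a: "0 < a"
  shows "\<exists>L. \<forall>x\<in>{a..b}. \<forall>z\<in>{a..b}. \<bar>FF d x - FF d z\<bar> \<le> L * \<bar>x - z\<bar>"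
proof -
  define F' where "F' x = 448/9 * d * (5/2 * x powr (5/2 - 1)) - 32 * (3 * x^2) - 16/9" for x
  define L where "L = 448/9 * \<bar>d\<bar> * (5/2 * b powr (3/2)) + 96 * b^2 + 16/9"
  have dF: "(FF d has_real_derivative F' x) (at x)" if "x > 0" for x
  proof -
    have p: "((\<lambda>x. x powr (5/2)) has_real_derivative 5/2 * x powr (5/2 - 1)) (at x)"
      by (rule has_real_derivative_powr[OF that])
    have q: "((\<lambda>x. x^3) has_real_derivative 3 * x^2) (at x)" using DERIV_pow[of 3 x] by simp
    have "((\<lambda>x. 448/9 * d * x powr (5/2) - 32 * x^3 - 16/9 * x) has_real_derivative
        448/9 * d * (5/2 * x powr (5/2 - 1)) - 32 * (3 * x^2) - 16/9 * 1) (at x)"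
      by (intro DERIV_diff DERIV_cmult p q DERIV_ident)
    then show ?thesis unfolding FF_def[abs_def] F'_def by simp
  qed
  have bF: "\<bar>F' x\<bar> \<le> L" if "a \<le> x" "x \<le> b" for x
  proof -
    have x0: "x > 0" using a that by simp
    have p: "x powr (3/2) \<le> b powr (3/2)" using x0 that by (intro powr_mono2) auto
    have p0: "x powr (3/2) \<ge> 0" by simp
    have s: "x^2 \<le> b^2" using x0 that by (intro power_mono) auto
    have "\<bar>F' x\<bar> \<le> 448/9 * \<bar>d\<bar> * (5/2 * x powr (3/2)) + 96 * x^2 + 16/9"
    proof -
      have h: "\<bar>d * x powr (3/2)\<bar> = \<bar>d\<bar> * x powr (3/2)" using p0 by (simp add: abs_mult)
      have h2: "x^2 \<ge> 0" by simp
      have e: "(5/2 - 1) = (3/2::real)" by simp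
      have e3: "448/9 * d * (5/2 * x powr (3/2)) = 1120/9 * (d * x powr (3/2))" by simp
      have e4: "448/9 * \<bar>d\<bar> * (5/2 * x powr (3/2)) = 1120/9 * (\<bar>d\<bar> * x powr (3/2))" by simp
      have e5: "1120/9 * \<bar>d * x powr (3/2)\<bar> = \<bar>1120/9 * (d * x powr (3/2))\<bar>" by (simp add: abs_mult)
      show ?thesis unfolding F'_def e e3 e4 h[symmetric] e5 using abs_help[of "32 * (3 * x^2)" "16/9" "1120/9 * (d * x powr (3/2))"] h2 by simp
    qed
    also have "\<dots> \<le> L"
    proof -
      have "448/9 * \<bar>d\<bar> * (5/2 * x powr (3/2)) \<le> 448/9 * \<bar>d\<bar> * (5/2 * b powr (3/2))"
        using p by (intro mult_left_mono) auto
      then show ?thesis unfolding L_def using s by linarith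
    qed
    finally show ?thesis .
  qed
  have main: "\<bar>FF d z - FF d x\<bar> \<le> L * \<bar>z - x\<bar>" if "a \<le> x" "x < z" "z \<le> b" for x z
  proof -
    have der: "(FF d has_real_derivative F' t) (at t)" if "x \<le> t" "t \<le> z" for t
      using dF[of t] a \<open>a \<le> x\<close> that by simp
    obtain \<xi> where xi: "x < \<xi>" "\<xi> < z" "FF d z - FF d x = (z - x) * F' \<xi>"
      using MVT2[OF \<open>x < z\<close> der] by blast
    have bx: "\<bar>F' \<xi>\<bar> \<le> L" using bF[of \<xi>] xi that by simp
    have "\<bar>FF d z - FF d x\<bar> = (z - x) * \<bar>F' \<xi>\<bar>" unfolding xi(3) using that by (simp add: abs_mult)
    also have "\<dots> \<le> (z - x) * L" using bx that by (intro mult_left_mono) auto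
    also have "\<dots> = L * \<bar>z - x\<bar>" using that by simp
    finally show ?thesis .
  qed
  show ?thesis
  proof (intro exI ballI)
    fix x z assume x: "x \<in> {a..b}" and z: "z \<in> {a..b}"
    show "\<bar>FF d x - FF d z\<bar> \<le> L * \<bar>x - z\<bar>"
    proof (cases x z rule: linorder_cases)
      case less
      have "\<bar>FF d z - FF d x\<bar> \<le> L * \<bar>z - x\<bar>" using main[of x z] x z less by simp
      then show ?thesis by (simp only: abs_minus_commute)
    next
      case equal then show ?thesis by simp
    next
      case greater then show ?thesis using main[of z x] x z by simp
    qed
  qed
qed



theorem mainTheorem6:
  fixes d :: real and k :: "real \<Rightarrow> real" and I :: "real set"
  assumes "d > d_star"
    and "maximal_sol I k"
    and "\<exists>s\<in>I. \<exists>t\<in>I. k s \<noteq> k t"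
    and "\<forall>s\<in>I. (deriv k s)\<^sup>2 =
            16/9 * (k s)\<^sup>2 * (16 * d * k s powr (3/2) - 9 * (k s)\<^sup>2 - 1)"
  shows "I = UNIV \<and> (\<exists>T>0. \<forall>s. k (s + T) = k s)"
proof -
  have d0: "d > 0" using dstar_facts[OF assms(1)] by simp
  obtain y1 y2 where r: "0 < y1" "y1 < 4*d/3" "4*d/3 < y2" "pp d y1 = 0" "pp d y2 = 0"
    using roots_exist[OF assms(1)] by blast
  interpret osc d y1 y2 using d0 r by unfold_locales auto
  have bs: "biconservative_sol I k" using assms(2) unfolding maximal_sol_def by simp
  have oI: "open I" and iI: "is_interval I" and neI: "I \<noteq> {}"
    using bs unfolding biconservative_sol_def by auto
  have kpos: "\<And>s. s \<in> I \<Longrightarrow> k s > 0" using bs unfolding biconservative_sol_def by auto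
  have dk: "\<And>s. s \<in> I \<Longrightarrow> (k has_real_derivative deriv k s) (at s)"
    using bs unfolding biconservative_sol_def by (auto simp: DERIV_deriv_iff_real_differentiable)
  have dk1: "\<And>s. s \<in> I \<Longrightarrow> (deriv k has_real_derivative deriv (deriv k) s) (at s)"
    using bs unfolding biconservative_sol_def by (auto simp: DERIV_deriv_iff_real_differentiable)
  have qk: "\<And>s. s \<in> I \<Longrightarrow> (deriv k s)^2 = QQ d (k s)" using assms(4) unfolding QQ_def by auto
  have dk2: "(deriv k has_real_derivative FF d (k s)) (at s)" if s: "s \<in> I" for s
  proof -
    have ode: "k s powr (3/4) * deriv (deriv (\<lambda>t. 1 / k t powr (3/4))) s - 3 * (k s)\<^sup>2 + 1 = 0"
      using bs s unfolding biconservative_sol_def by auto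
    have E: "k s powr (3/4) * deriv (deriv (\<lambda>t. 1 / k t powr (3/4))) s
           = 21/16 * (deriv k s)^2 / (k s)^2 - 3/4 * deriv (deriv k) s / k s"
      by (rule ode_core[OF oI s kpos dk dk1[OF s]])
    have "21/16 * (deriv k s)^2 / (k s)^2 - 3/4 * deriv (deriv k) s / k s - 3 * (k s)^2 + 1 = 0"
      using ode E by linarith
    then have "deriv (deriv k) s = FF d (k s)" using ode_to_FF[OF kpos[OF s] qk[OF s]] by simp
    then show ?thesis using dk1[OF s] by simp
  qed
  have krange: "y1^2 \<le> k s \<and> k s \<le> y2^2" if s: "s \<in> I" for s
  proof -
    define y where "y = sqrt (k s)"
    have y0: "y > 0" unfolding y_def using kpos[OF s] by simp
    have ky: "k s = y^2" unfolding y_def using kpos[OF s] by simp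
    have "QQ d (k s) = 16/9 * (k s)^2 * pp d y"
      unfolding QQ_def pp_def ky sq_powr[OF y0] by (simp add: power_mult[symmetric] algebra_simps)
    then have "16/9 * (k s)^2 * pp d y \<ge> 0" using qk[OF s] by (metis zero_le_power2)
    then have "pp d y \<ge> 0" using kpos[OF s] by (simp add: zero_le_mult_iff)
    then have "y1 \<le> y \<and> y \<le> y2" using pp_range y0 by blast
    then show ?thesis unfolding ky using r(1) by (auto intro: power_mono)
  qed
  obtain s0 where s0: "s0 \<in> I" using neI by blast
  define y0 where "y0 = sqrt (k s0)"
  define v0 where "v0 = deriv k s0"
  have y0p: "y0 > 0" unfolding y0_def using kpos[OF s0] by simp
  have ky0: "k s0 = y0^2" unfolding y0_def using kpos[OF s0] by simp
  have y0r: "y1 \<le> y0" "y0 \<le> y2"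
  proof -
    have "y1^2 \<le> y0^2" "y0^2 \<le> y2^2" using krange[OF s0] ky0 by auto
    then show "y1 \<le> y0" "y0 \<le> y2" using y0p r(1) y12 power2_le_imp_le[of y1 y0] power2_le_imp_le[of y0 y2] by auto
  qed
  define cc where "cc = (mm - y0) / hh"
  have cc: "-1 \<le> cc" "cc \<le> 1"
    unfolding cc_def using hh_pos y0r unfolding mm_def hh_def by (auto simp: field_simps)
  define th0 where "th0 = (if v0 \<ge> 0 then arccos cc else - arccos cc)"
  have cth0: "cos th0 = cc" unfolding th0_def using cc by simp
  have Yth0: "Y th0 = y0" unfolding Y_def cth0 cc_def using hh_pos by simp
  have sq: "(GG th0)^2 = v0^2"
  proof -
    have "(GG th0)^2 = 16/9 * y0^4 * pp d y0" unfolding GG_sq Yth0 ..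
    also have "\<dots> = QQ d (k s0)"
      unfolding QQ_def pp_def ky0 sq_powr[OF y0p] by (simp add: power_mult[symmetric] algebra_simps)
    also have "\<dots> = v0^2" unfolding v0_def using qk[OF s0] by simp
    finally show ?thesis .
  qed
  have GGv0: "GG th0 = v0"
  proof (cases "v0 \<ge> 0")
    case True
    then have "sin th0 \<ge> 0" unfolding th0_def using cc sin_ge_zero[of "arccos cc"] arccos_bounded[OF cc] by simp
    then have "GG th0 \<ge> 0" by (rule GG_sign)
    then show ?thesis using sq True by simp
  next
    case False
    then have "sin th0 \<le> 0" unfolding th0_def using cc sin_ge_zero[of "arccos cc"] arccos_bounded[OF cc] by simp
    then have "GG th0 \<le> 0" by (rule GG_sign)
    then have "(- GG th0)^2 = (- v0)^2" "- GG th0 \<ge> 0" "- v0 \<ge> 0" using sq False by auto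
    then show ?thesis by (metis power2_eq_iff_nonneg neg_equal_iff_equal)
  qed
  define c where "c = Tf th0 - s0"
  have thc: "th (s0 + c) = th0" unfolding c_def by (simp add: th_Tf)
  have g0: "psi c s0 = k s0" unfolding psi_def thc Yth0 ky0 ..
  have g1: "deriv k s0 = psi1 c s0" unfolding psi1_def thc GGv0 v0_def ..
  obtain L where L: "\<forall>x\<in>{y1^2..y2^2}. \<forall>z\<in>{y1^2..y2^2}. \<bar>FF d x - FF d z\<bar> \<le> L * \<bar>x - z\<bar>"
    using FF_lip[of "y1^2" "y2^2" d] r(1) by auto
  have eq: "k t = psi c t" if t: "t \<in> I" for t
  proof (rule gronwall_unique[where k=k and g="psi c" and kd="deriv k" and gd="psi1 c" and F="FF d"
        and I=I and sa=s0 and V="{y1^2..y2^2}" and L=L])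
    show "is_interval I" by (rule iI)
    show "s0 \<in> I" by (rule s0)
    show "t \<in> I" by (rule t)
    show "k s0 = psi c s0" using g0 by simp
    show "deriv k s0 = psi1 c s0" by (rule g1)
    fix u assume u: "u \<in> I"
    show "(k has_real_derivative deriv k u) (at u)" by (rule dk[OF u])
    show "(deriv k has_real_derivative FF d (k u)) (at u)" by (rule dk2[OF u])
    show "(psi c has_real_derivative psi1 c u) (at u)" by (rule psi_deriv)
    show "(psi1 c has_real_derivative FF d (psi c u)) (at u)" by (rule psi1_deriv)
    show "k u \<in> {y1^2..y2^2}" using krange[OF u] by simp
    show "psi c u \<in> {y1^2..y2^2}" using psi_range[of c u] by simp
  next
    fix x z assume "x \<in> {y1^2..y2^2}" "z \<in> {y1^2..y2^2}"
    then show "\<bar>FF d x - FF d z\<bar> \<le> L * \<bar>x - z\<bar>" using L by blast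
  qed
  have bsg: "biconservative_sol UNIV (psi c)"
    unfolding biconservative_sol_def
  proof (intro conjI ballI)
    fix s :: real
    have dpsi: "deriv (psi c) = psi1 c" using psi_deriv DERIV_imp_deriv by blast
    show "psi c s > 0" by (rule psi_pos)
    show "psi c differentiable (at s)" using psi_deriv real_differentiable_def by blast
    show "deriv (psi c) differentiable (at s)" unfolding dpsi using psi1_deriv real_differentiable_def by blast
    have "psi c s powr (3/4) * deriv (deriv (\<lambda>t. 1 / psi c t powr (3/4))) s
        = 21/16 * (psi1 c s)^2 / (psi c s)^2 - 3/4 * FF d (psi c s) / psi c s"
      by (rule ode_core[of UNIV]) (use psi_pos psi_deriv psi1_deriv in auto)
    moreover have "21/16 * (psi1 c s)^2 / (psi c s)^2 - 3/4 * FF d (psi c s) / psi c s - 3 * (psi c s)^2 + 1 = 0"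
      using ode_to_FF[OF psi_pos psi1_sq] by simp
    ultimately show "psi c s powr (3/4) * deriv (deriv (\<lambda>t. 1 / psi c t powr (3/4))) s - 3 * (psi c s)\<^sup>2 + 1 = 0"
      by simp
  qed auto
  have IU: "I = UNIV"
    using assms(2) bsg eq unfolding maximal_sol_def by (metis subset_UNIV)
  have "\<forall>s. k (s + Tp) = k s" using eq psi_periodic IU by auto
  then show ?thesis using IU Tp_pos by blast
qed


end
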